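(* Let $W$ be a prewedge and $a,b,v\in W$. Then $a+v\le b+v$ if and only if $a+\tfrac1n v\le b+\tfrac1n v$ for every integer $n\ge1$.
   Context: A prewedge is a set $W$ with a commutative associative addition with neutral element $0$ and a multiplication $[0,\infty)\times W\to W$, $(\lambda,v)\mapsto\lambda v$, such that $\lambda(\eta v)=(\lambda\eta)v$, $0v=0$, $1v=v$, $(\lambda+\eta)v=\lambda v+\eta v$, $\lambda(v+w)=\lambda v+\lambda w$ for all $\lambda,\eta\ge0$, $v,w\in W$. It carries the preorder $v\le w$ iff $v+z=w$ for some $z\in W$. *)

theory Defs
  imports Main "HOL.Real"
begin

text \<open>A prewedge, with underlying set the whole type 'a (always nonempty, containing 0).
  Scalar multiplication is given as a function on all reals, but only its restriction
  to nonnegative scalars is constrained/used.\<close>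

definition prewedge :: "('a \<Rightarrow> 'a \<Rightarrow> 'a) \<Rightarrow> 'a \<Rightarrow> (real \<Rightarrow> 'a \<Rightarrow> 'a) \<Rightarrow> bool" where
  "prewedge add z smul \<longleftrightarrow>
     (\<forall>u v. add u v = add v u) \<and>
     (\<forall>u v w. add (add u v) w = add u (add v w)) \<and>
     (\<forall>v. add z v = v) \<and>
     (\<forall>l e v. l \<ge> 0 \<longrightarrow> e \<ge> 0 \<longrightarrow> smul l (smul e v) = smul (l * e) v) \<and>
     (\<forall>v. smul 0 v = z) \<and>
     (\<forall>v. smul 1 v = v) \<and>
     (\<forall>l e v. l \<ge> 0 \<longrightarrow> e \<ge> 0 \<longrightarrow> smul (l + e) v = add (smul l v) (smul e v)) \<and>
     (\<forall>l v w. l \<ge> 0 \<longrightarrow> smul l (add v w) = add (smul l v) (smul l w))"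

definition pw_le :: "('a \<Rightarrow> 'a \<Rightarrow> 'a) \<Rightarrow> 'a \<Rightarrow> 'a \<Rightarrow> bool" where
  "pw_le add v w \<longleftrightarrow> (\<exists>z. add v z = w)"

end

theory Submission
  imports Defs
begin

theorem mainTheorem8:
  fixes add :: "'a \<Rightarrow> 'a \<Rightarrow> 'a" and z :: 'a and smul :: "real \<Rightarrow> 'a \<Rightarrow> 'a"
    and a b v :: 'a
  assumes "prewedge add z smul"
  shows "pw_le add (add a v) (add b v) \<longleftrightarrow>
         (\<forall>n::nat. n \<ge> 1 \<longrightarrow> pw_le add (add a (smul (1 / real n) v)) (add b (smul (1 / real n) v)))"
proof -
  note P = assms[unfolded prewedge_def]
  interpret abel_semigroup add
    by unfold_locales (use P in auto)
  have z0: "add x z = x" for x using P commute by metis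
  have one: "smul 1 x = x" for x using P by blast
  have zer: "smul 0 x = z" for x using P by blast
  have dist: "\<And>l e x. l \<ge> 0 \<Longrightarrow> e \<ge> 0 \<Longrightarrow> smul (l + e) x = add (smul l x) (smul e x)"
    using P by blast
  have distv: "\<And>l x y. l \<ge> 0 \<Longrightarrow> smul l (add x y) = add (smul l x) (smul l y)"
    using P by blast
  have trans: "pw_le add x y \<Longrightarrow> pw_le add y w \<Longrightarrow> pw_le add x w" for x y w
    unfolding pw_le_def by (metis assoc)
  show ?thesis
  proof
    assume "\<forall>n::nat. n \<ge> 1 \<longrightarrow> pw_le add (add a (smul (1 / real n) v)) (add b (smul (1 / real n) v))"
    then show "pw_le add (add a v) (add b v)" using one[of v] by (metis div_by_1 of_nat_1 order_refl)
  next
    assume "pw_le add (add a v) (add b v)"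
    then obtain w where w: "add (add a v) w = add b v" unfolding pw_le_def by blast
    show "\<forall>n::nat. n \<ge> 1 \<longrightarrow> pw_le add (add a (smul (1 / real n) v)) (add b (smul (1 / real n) v))"
    proof (intro allI impI)
      fix n :: nat assume n: "n \<ge> 1"
      define m where "m = real n"
      have m0: "m > 0" using n m_def by simp
      define u where "u = smul (1/m) v"
      define sa where "sa = smul (1/m) a"
      define sb where "sb = smul (1/m) b"
      define sw where "sw = smul (1/m) w"
      have key: "add (add sa u) sw = add sb u"
        using arg_cong[OF w, of "smul (1/m)"] m0
        by (simp add: distv sa_def sb_def sw_def u_def)
      define c where "c k = add (add (smul ((m - real k)/m) a) (smul (real k/m) b)) u" for k :: nat
      have step: "pw_le add (c k) (c (Suc k))" if "k < n" for k
      proof -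
        have "(m - real k)/m = (m - real (Suc k))/m + 1/m"
          using m0 by (simp add: field_simps)
        moreover have "(m - real (Suc k))/m \<ge> 0" using that m0 m_def by simp
        ultimately have A: "smul ((m - real k)/m) a = add (smul ((m - real (Suc k))/m) a) sa"
          using m0 dist sa_def by simp
        have "real (Suc k)/m = real k/m + 1/m" using m0 by (simp add: field_simps)
        then have B: "smul (real (Suc k)/m) b = add (smul (real k/m) b) sb"
          using m0 dist sb_def by simp
        have "add (c k) sw = c (Suc k)"
          unfolding c_def A B using key
          by (metis assoc commute)
        then show ?thesis unfolding pw_le_def by blast
      qed
      have ind: "k \<le> n \<Longrightarrow> pw_le add (c 0) (c k)" for k
      proof (induction k)
        case 0 then show ?case unfolding pw_le_def using z0 by blast
      next
        case (Suc k) then show ?case using step trans by simp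
      qed
      have c0: "c 0 = add a u" unfolding c_def using m0 by (simp add: one zer z0)
      have cn: "c n = add b u" unfolding c_def using m0 m_def by (simp add: one zer z0 commute)
      show "pw_le add (add a (smul (1 / real n) v)) (add b (smul (1 / real n) v))"
        using ind[of n] c0 cn u_def m_def by simp
    qed
  qed
qed

end
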